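(* Let $n\ge 2$, let $P\neq[n,n-1,\ldots,1]$ be an arithmetically progressed permutation of length $n$ with ratio $k$, and let $\mathsf{T}_P$ be its associated ternary string. Then the matrix-based BWT of $\mathsf{T}_P$ coincides with the suffix-array-based BWT of $\mathsf{T}_P$.
   Context: Alphabet $\{\mathtt{a}<\mathtt{b}<\mathtt{c}\}$, lexicographic order $\prec$ with a proper prefix smaller than the longer string; suffix array $\mathsf{SA}_{\mathsf{T}}$: permutation of $[1..n]$ such that $\mathsf{T}[\mathsf{SA}_{\mathsf{T}}[i]..n]$ is the $i$-th smallest suffix. $x\bmod n$ denotes the representative of $x$ modulo $n$ in $[1..n]$. An arithmetically progressed permutation of length $n$ with ratio $k\in[1..n-1]$ is a permutation $P=[p_1,\ldots,p_n]$ of $[1..n]$ with $p_{i+1}=p_i+k\bmod n$. Ternary string associated with $P$: cut $P$ immediately after the entry $n-k$ and immediately after the entry $(p_1-k-1)\bmod n$, giving consecutive possibly empty blocks $A,B,C$ with $P=ABC$; set $\mathsf{T}_P[p_i]=\mathtt{a},\mathtt{b},\mathtt{c}$ according as $p_i$ lies in $A$, $B$, $C$. Suffix-array-based BWT: $\mathsf{BWT}_{\mathsf{T}}[i]=\mathsf{T}[\mathsf{SA}_{\mathsf{T}}[i]-1\bmod n]$. Matrix-based BWT: sort the $n$ cyclic rotations $\mathsf{T}[j..n]\mathsf{T}[1..j-1]$ lexicographically and read, top to bottom, the last character of each sorted rotation. *)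

theory Defs
  imports Main "HOL-Library.List_Lexorder"
begin

datatype tern = TA | TB | TC

fun tern_rank :: "tern \<Rightarrow> nat" where
  "tern_rank TA = 0" | "tern_rank TB = 1" | "tern_rank TC = 2"

instantiation tern :: linorder
begin
definition less_eq_tern_def: "(x::tern) \<le> y \<longleftrightarrow> tern_rank x \<le> tern_rank y"
definition less_tern_def: "(x::tern) < y \<longleftrightarrow> tern_rank x < tern_rank y"
instance
proof
  fix x y z :: tern
  show "x < y \<longleftrightarrow> x \<le> y \<and> \<not> y \<le> x" by (auto simp: less_eq_tern_def less_tern_def)
  show "x \<le> x" by (simp add: less_eq_tern_def)
  show "x \<le> y \<Longrightarrow> y \<le> z \<Longrightarrow> x \<le> z" by (simp add: less_eq_tern_def)
  show "x \<le> y \<Longrightarrow> y \<le> x \<Longrightarrow> x = y"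
    by (cases x; cases y) (simp_all add: less_eq_tern_def)
  show "x \<le> y \<or> y \<le> x" by (auto simp: less_eq_tern_def)
qed
end

text \<open>x mod n with representative in [1..n].\<close>
definition modn :: "int \<Rightarrow> nat \<Rightarrow> nat" where
  "modn x n = nat ((x - 1) mod int n) + 1"

text \<open>Strings are lists, 1-indexed in the paper: T[i] = T ! (i-1).
  Suffix T[i..n] and rotation T[j..n]T[1..j-1].\<close>
definition suffix_at :: "'a list \<Rightarrow> nat \<Rightarrow> 'a list" where
  "suffix_at T i = drop (i - 1) T"

definition rotation_at :: "'a list \<Rightarrow> nat \<Rightarrow> 'a list" where
  "rotation_at T j = drop (j - 1) T @ take (j - 1) T"

definition is_suffix_array :: "'a::linorder list \<Rightarrow> nat list \<Rightarrow> bool" where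
  "is_suffix_array T SA \<longleftrightarrow> length SA = length T \<and> distinct SA \<and>
     set SA = {1..length T} \<and>
     (\<forall>i j. i < j \<and> j < length SA \<longrightarrow> suffix_at T (SA ! i) < suffix_at T (SA ! j))"

definition bwt_sa :: "'a list \<Rightarrow> nat list \<Rightarrow> 'a list" where
  "bwt_sa T SA = map (\<lambda>s. T ! (modn (int s - 1) (length T) - 1)) SA"

definition bwt_matrix :: "'a::linorder list \<Rightarrow> 'a list" where
  "bwt_matrix T = map last (sort (map (rotation_at T) [1..<length T + 1]))"

definition arith_prog_perm :: "nat \<Rightarrow> nat \<Rightarrow> nat list \<Rightarrow> bool" where
  "arith_prog_perm n k P \<longleftrightarrow> length P = n \<and> distinct P \<and> set P = {1..n} \<and>
     1 \<le> k \<and> k \<le> n - 1 \<and>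
     (\<forall>i. i + 1 < n \<longrightarrow> P ! (i + 1) = modn (int (P ! i) + int k) n)"

definition cut_after :: "nat list \<Rightarrow> nat \<Rightarrow> nat" where
  "cut_after P v = Suc (THE i. i < length P \<and> P ! i = v)"

definition ternary_string :: "nat \<Rightarrow> nat \<Rightarrow> nat list \<Rightarrow> tern list" where
  "ternary_string n k P =
     (let c1 = cut_after P (n - k);
          c2 = cut_after P (modn (int (P ! 0) - int k - 1) n);
          lo = min c1 c2; hi = max c1 c2;
          A = take lo P; B = drop lo (take hi P)
      in map (\<lambda>v. if v \<in> set A then TA else if v \<in> set B then TB else TC) [1..<n + 1])"

end

theory Submission
  imports Defs "HOL-Library.Multiset"
begin


lemma lex_le_nth:
  "length a = length b \<Longrightarrow> (\<forall>t<length a. (\<forall>s<t. a!s = b!s) \<longrightarrow> a!t \<le> b!t) \<Longrightarrow> (a::'a::linorder list) \<le> b"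
proof (induction a arbitrary: b)
  case Nil then show ?case by simp
next
  case (Cons x xs)
  then obtain y ys where b: "b = y # ys" by (cases b) auto
  have xy: "x \<le> y" using Cons.prems(2) b by force
  show ?case
  proof (cases "x = y")
    case True
    have "xs \<le> ys"
    proof (rule Cons.IH)
      show "length xs = length ys" using Cons.prems b by simp
      show "\<forall>t<length xs. (\<forall>s<t. xs ! s = ys ! s) \<longrightarrow> xs ! t \<le> ys ! t"
      proof (intro allI impI)
        fix t assume t: "t < length xs" and h: "\<forall>s<t. xs ! s = ys ! s"
        have "\<forall>s<Suc t. (x#xs) ! s = b ! s"
          using h True b by (auto simp: less_Suc_eq_0_disj)
        then show "xs ! t \<le> ys ! t" using Cons.prems(2) t b by force
      qed
    qed
    then show ?thesis using True b by simp
  next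
    case False
    then show ?thesis using xy b by simp
  qed
qed

lemma modn_step: "v \<in> {1..n} \<Longrightarrow> modn (int v + 1) n = v mod n + 1"
  unfolding modn_def by (auto simp: nat_mod_as_int)

definition S :: "nat \<Rightarrow> nat \<Rightarrow> nat \<Rightarrow> nat" where
  "S n t v = (v - 1 + t) mod n + 1"

lemma S_in: "n \<ge> 1 \<Longrightarrow> S n t v \<in> {1..n}" unfolding S_def
  by (simp add: Suc_leI)

lemma S_Suc: "n \<ge> 1 \<Longrightarrow> S n (Suc t) v = modn (int (S n t v) + 1) n"
  apply (subst modn_step[OF S_in], assumption)
  unfolding S_def by (simp add: mod_Suc_eq)

lemma S_0: "v \<in> {1..n} \<Longrightarrow> S n 0 v = v" unfolding S_def by auto

lemma rot_nth: "length T = n \<Longrightarrow> v \<in> {1..n} \<Longrightarrow> t < n \<Longrightarrow>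
   rotation_at T v ! t = T ! (S n t v - 1)"
  unfolding rotation_at_def S_def
  by (auto simp: nth_append mod_if add.commute)

lemma mono_step:
  fixes a b m n :: nat
  assumes "a < b" "b < n" "m < n" "\<not> (a < n - m \<and> n - m \<le> b)"
  shows "(a + m) mod n < (b + m) mod n"
proof (cases "b + m < n")
  case True then show ?thesis using assms by simp
next
  case False
  then have "a + m \<ge> n" using assms by linarith
  then have "(a+m) mod n = a + m - n" "(b+m) mod n = b + m - n"
    using assms by (simp_all add: mod_if)
  then show ?thesis using assms \<open>a+m\<ge>n\<close> by linarith
qed

locale core =
  fixes T :: "tern list" and n m :: nat and idx :: "nat \<Rightarrow> nat" and lt :: "nat \<Rightarrow> tern"
  assumes len: "length T = n" and n1: "n \<ge> 1" and mn: "m < n"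
    and idx_lt: "\<And>v. v \<in> {1..n} \<Longrightarrow> idx v < n"
    and idx_inj: "inj_on idx {1..n}"
    and Tnth: "\<And>v. v \<in> {1..n} \<Longrightarrow> T ! (v - 1) = lt (idx v)"
    and lt_mono: "\<And>i j. i \<le> j \<Longrightarrow> lt i \<le> lt j"
    and step: "\<And>v. v \<in> {1..n} \<Longrightarrow> idx (modn (int v + 1) n) = (idx v + m) mod n"
    and nowrap: "\<And>i j. i < j \<Longrightarrow> j < n \<Longrightarrow> lt i = lt j \<Longrightarrow> \<not> (i < n - m \<and> n - m \<le> j)"
    and lastcut: "\<And>i. i < idx n \<Longrightarrow> lt i \<noteq> lt (idx n)"
begin

lemma mono1:
  assumes "v \<in> {1..n}" "w \<in> {1..n}" "idx v < idx w" "lt (idx v) = lt (idx w)"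
  shows "idx (modn (int v + 1) n) < idx (modn (int w + 1) n)"
  using mono_step[of "idx v" "idx w" n m] assms idx_lt nowrap mn step by auto

lemma rot_le:
  assumes v: "v \<in> {1..n}" and w: "w \<in> {1..n}" and lt: "idx v < idx w"
  shows "rotation_at T v \<le> rotation_at T w"
proof -
  have key: "(\<forall>s<t. lt (idx (S n s v)) = lt (idx (S n s w))) \<longrightarrow> idx (S n t v) < idx (S n t w)" for t
  proof (induction t)
    case 0 then show ?case using lt v w by (simp add: S_0)
  next
    case (Suc t)
    show ?case
    proof
      assume h: "\<forall>s<Suc t. lt (idx (S n s v)) = lt (idx (S n s w))"
      then have "idx (S n t v) < idx (S n t w)" using Suc by auto
      then show "idx (S n (Suc t) v) < idx (S n (Suc t) w)"
        using mono1[OF S_in[OF n1] S_in[OF n1]] h S_Suc[OF n1] by auto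
    qed
  qed
  show ?thesis
  proof (rule lex_le_nth)
    show "length (rotation_at T v) = length (rotation_at T w)"
      by (simp add: rotation_at_def)
    show "\<forall>t<length (rotation_at T v). (\<forall>s<t. rotation_at T v ! s = rotation_at T w ! s) \<longrightarrow>
        rotation_at T v ! t \<le> rotation_at T w ! t"
    proof (intro allI impI)
      fix t assume t: "t < length (rotation_at T v)" and h: "\<forall>s<t. rotation_at T v ! s = rotation_at T w ! s"
      have tn: "t < n" using t len by (simp add: rotation_at_def)
      have "\<forall>s<t. lt (idx (S n s v)) = lt (idx (S n s w))"
        using h tn rot_nth[OF len v] rot_nth[OF len w] Tnth[OF S_in[OF n1]] by auto
      then have "idx (S n t v) < idx (S n t w)" using key by blast
      then show "rotation_at T v ! t \<le> rotation_at T w ! t"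
        using rot_nth[OF len v tn] rot_nth[OF len w tn] Tnth[OF S_in[OF n1]] lt_mono by simp
    qed
  qed
qed

lemma suffix_cons: "v \<in> {1..n} \<Longrightarrow> suffix_at T v = T ! (v - 1) # suffix_at T (v + 1)"
  unfolding suffix_at_def using len Cons_nth_drop_Suc[of "v - 1" T] by auto

lemma suf_less:
  "v \<in> {1..n} \<Longrightarrow> w \<in> {1..n} \<Longrightarrow> idx v < idx w \<Longrightarrow> suffix_at T v < suffix_at T w"
proof (induction "n - v" arbitrary: v w rule: less_induct)
  case less
  show ?case
  proof (cases "lt (idx v) = lt (idx w)")
    case False
    then have "lt (idx v) < lt (idx w)" using lt_mono[of "idx v" "idx w"] less.prems by auto
    then show ?thesis using suffix_cons less.prems Tnth by simp
  next
    case True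
    have vw: "v \<noteq> w" using less.prems by auto
    show ?thesis
    proof (cases "v = n")
      case True
      then have "w < n" using vw less.prems by auto
      then have "suffix_at T (w+1) \<noteq> []" using len by (simp add: suffix_at_def)
      moreover have "suffix_at T (v+1) = []" using True len by (simp add: suffix_at_def)
      ultimately show ?thesis using suffix_cons less.prems Tnth \<open>lt (idx v) = lt (idx w)\<close>
        by (cases "suffix_at T (w+1)") auto
    next
      case vn: False
      have wn: "w \<noteq> n" using lastcut True less.prems by metis
      have v1: "v + 1 \<in> {1..n}" and w1: "w + 1 \<in> {1..n}" using vn wn less.prems by auto
      have "modn (int v + 1) n = v + 1" "modn (int w + 1) n = w + 1"
        using modn_step less.prems vn wn by auto
      then have "idx (v+1) < idx (w+1)" using mono1 less.prems True by metis
      then have "suffix_at T (v+1) < suffix_at T (w+1)"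
        using less.hyps[of "v+1" "w+1"] v1 w1 vn less.prems by auto
      then show ?thesis using suffix_cons less.prems Tnth True by simp
    qed
  qed
qed

lemma last_rot: "s \<in> {1..n} \<Longrightarrow> last (rotation_at T s) = T ! (modn (int s - 1) n - 1)"
proof -
  assume s: "s \<in> {1..n}"
  show ?thesis
  proof (cases "s = 1")
    case True
    have "nat (- 1 mod int n) = n - 1" using n1 by (simp add: zmod_minus1 nat_diff_distrib)
    moreover have "T \<noteq> []" using len n1 by auto
    ultimately show ?thesis using len n1 True by (simp add: rotation_at_def modn_def last_conv_nth)
  next
    case False
    then have "modn (int s - 1) n = s - 1" using s unfolding modn_def by auto
    moreover have "last (rotation_at T s) = T ! (s - 2)"
    proof -
      have "take (s - 1) T \<noteq> []" "s - 2 < s - 1" "s - 1 < n" using False s len by auto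
      then show ?thesis using len
        by (simp add: rotation_at_def last_append last_conv_nth min_def nth_take numeral_2_eq_2)
    qed
    ultimately show ?thesis by (simp add: numeral_2_eq_2)
  qed
qed

lemma bwt_eq:
  assumes sa: "is_suffix_array T SA"
  shows "bwt_matrix T = bwt_sa T SA"
proof -
  have lenSA: "length SA = n" and dSA: "distinct SA" and setSA: "set SA = {1..n}"
    and ord: "\<And>i j. i < j \<Longrightarrow> j < length SA \<Longrightarrow> suffix_at T (SA ! i) < suffix_at T (SA ! j)"
    using sa len unfolding is_suffix_array_def by auto
  have inS: "\<And>i. i < n \<Longrightarrow> SA ! i \<in> {1..n}" using setSA lenSA nth_mem by blast
  have idxord: "idx (SA ! i) < idx (SA ! j)" if ij: "i < j" "j < n" for i j
  proof (rule ccontr)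
    assume "\<not> idx (SA ! i) < idx (SA ! j)"
    moreover have "SA ! i \<noteq> SA ! j" using dSA ij lenSA nth_eq_iff_index_eq by fastforce
    then have "idx (SA ! i) \<noteq> idx (SA ! j)" using idx_inj inS ij inj_on_contraD by (metis less_trans)
    ultimately have "idx (SA ! j) < idx (SA ! i)" by simp
    then have "suffix_at T (SA ! j) < suffix_at T (SA ! i)" using suf_less inS ij by (meson less_trans)
    moreover have "suffix_at T (SA ! i) < suffix_at T (SA ! j)" using ord ij lenSA by simp
    ultimately show False by simp
  qed
  have sorted: "sorted (map (rotation_at T) SA)"
    unfolding sorted_iff_nth_mono_less
    using idxord rot_le inS lenSA by (auto simp: less_imp_le)
  have "mset SA = mset [1..<n+1]"
  proof -
    have "set [1..<n+1] = {1..n}" by auto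
    then show ?thesis using dSA setSA by (metis distinct_upt set_eq_iff_mset_eq_distinct)
  qed
  then have "mset (map (rotation_at T) SA) = mset (map (rotation_at T) [1..<n+1])"
    by (metis mset_map)
  then have "sort (map (rotation_at T) [1..<n+1]) = map (rotation_at T) SA"
    using properties_for_sort sorted by blast
  then have "bwt_matrix T = map (\<lambda>s. last (rotation_at T s)) SA"
    unfolding bwt_matrix_def using len by simp
  also have "\<dots> = bwt_sa T SA"
    unfolding bwt_sa_def using last_rot setSA len by (auto intro: map_cong)
  finally show ?thesis .
qed

end


lemma int_modn: "n > 0 \<Longrightarrow> int (modn x n) = (x - 1) mod int n + 1"
  unfolding modn_def by simp

lemma modn_cong: "n > 0 \<Longrightarrow> modn x n = modn y n \<longleftrightarrow> x mod int n = y mod int n"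
proof -
  assume n: "n > 0"
  have "modn x n = modn y n \<longleftrightarrow> (x - 1) mod int n = (y - 1) mod int n"
    using int_modn[OF n, of x] int_modn[OF n, of y] by (metis add_right_cancel of_nat_eq_iff)
  also have "\<dots> \<longleftrightarrow> x mod int n = y mod int n"
    by (simp add: mod_eq_dvd_iff)
  finally show ?thesis .
qed

lemma modn_add: "n > 0 \<Longrightarrow> modn (int (modn x n) + y) n = modn (x + y) n"
proof -
  assume n: "n > 0"
  have "((x - 1) mod int n + 1 + y) mod int n = ((x - 1) + 1 + y) mod int n"
    by (metis mod_add_left_eq)
  then show ?thesis using n by (simp add: modn_cong int_modn)
qed

lemma modn_id: "v \<in> {1..n} \<Longrightarrow> modn (int v) n = v"
  unfolding modn_def by auto

lemma modn_in: "n > 0 \<Longrightarrow> modn x n \<in> {1..n}"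
proof -
  assume n: "n > 0"
  have "(x - 1) mod int n < int n" using n by simp
  moreover have "(x - 1) mod int n \<ge> 0" using n by simp
  ultimately have "nat ((x - 1) mod int n) < n" by linarith
  then show ?thesis unfolding modn_def by auto
qed

locale app =
  fixes n k :: nat and P :: "nat list"
  assumes n2: "n \<ge> 2" and ap: "arith_prog_perm n k P"
begin

definition p where "p = P ! 0"
definition idx where "idx v = (THE i. i < n \<and> P ! i = v)"

lemma lenP: "length P = n" and dP: "distinct P" and setP: "set P = {1..n}"
  and k1: "1 \<le> k" and kn: "k \<le> n - 1"
  and Pstep: "\<And>i. i + 1 < n \<Longrightarrow> P ! (i + 1) = modn (int (P ! i) + int k) n"
  using ap unfolding arith_prog_perm_def by auto

lemma n0: "n > 0" using n2 by simp

lemma P_in: "i < n \<Longrightarrow> P ! i \<in> {1..n}" using setP lenP nth_mem by blast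

lemma idx_prop: "v \<in> {1..n} \<Longrightarrow> idx v < n \<and> P ! (idx v) = v"
proof -
  assume v: "v \<in> {1..n}"
  have "\<exists>!i. i < n \<and> P ! i = v" using distinct_Ex1[OF dP] v setP lenP by auto
  then show ?thesis unfolding idx_def by (rule theI')
qed

lemma idx_nth: "i < n \<Longrightarrow> idx (P ! i) = i"
proof -
  assume i: "i < n"
  have h: "idx (P ! i) < n \<and> P ! (idx (P ! i)) = P ! i" using idx_prop[OF P_in[OF i]] .
  have "i < length P" "idx (P ! i) < length P" using i h lenP by simp_all
  then show ?thesis using nth_eq_iff_index_eq[OF dP, of "idx (P!i)" i] h by blast
qed

lemma idx_inj: "inj_on idx {1..n}"
proof (rule inj_onI)
  fix x y assume "x \<in> {1..n}" "y \<in> {1..n}" "idx x = idx y"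
  then show "x = y" using idx_prop[of x] idx_prop[of y] by metis
qed

lemma P_formula: "i < n \<Longrightarrow> P ! i = modn (int p + int i * int k) n"
proof (induction i)
  case 0 then show ?case using P_in[of 0] n0 by (simp add: p_def modn_id)
next
  case (Suc i)
  then have "P ! (Suc i) = modn (int (P ! i) + int k) n" using Pstep by simp
  also have "\<dots> = modn (int (modn (int p + int i * int k) n) + int k) n" using Suc by simp
  also have "\<dots> = modn (int p + int (Suc i) * int k) n" using modn_add[OF n0] by (simp add: algebra_simps)
  finally show ?case .
qed

lemma idx_shift:
  assumes v: "v \<in> {1..n}"
  shows "idx (modn (int v + int d * int k) n) = (idx v + d) mod n"
proof -
  define j where "j = (idx v + d) mod n"
  have jn: "j < n" using n0 by (simp add: j_def)
  have "P ! j = modn (int p + int j * int k) n" using P_formula jn by simp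
  also have "\<dots> = modn (int p + int (idx v + d) * int k) n"
  proof -
    have "int j = (int (idx v) + int d) mod int n" by (simp add: j_def zmod_int)
    then have "(int p + int j * int k) mod int n = (int p + (int (idx v) + int d) * int k) mod int n"
    proof -
      have "(int j * int k) mod int n = ((int (idx v) + int d) * int k) mod int n"
        using \<open>int j = _\<close> mod_mult_left_eq[of "int (idx v) + int d" "int n" "int k"] by simp
      then show ?thesis
        using mod_add_right_eq[of "int p" "int j * int k" "int n"]
          mod_add_right_eq[of "int p" "(int (idx v) + int d) * int k" "int n"] by simp
    qed
    then show ?thesis using n0 by (simp add: modn_cong)
  qed
  also have "\<dots> = modn (int (modn (int p + int (idx v) * int k) n) + int d * int k) n"
    using modn_add[OF n0] by (simp add: algebra_simps)
  also have "\<dots> = modn (int v + int d * int k) n"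
    using P_formula[of "idx v"] idx_prop[OF v] by simp
  finally have "P ! j = modn (int v + int d * int k) n" .
  then show ?thesis using idx_nth[OF jn] j_def by simp
qed


lemma p_in: "p \<in> {1..n}" using P_in[of 0] n0 by (simp add: p_def)
lemma idx_p: "idx p = 0" using idx_nth[of 0] n0 by (simp add: p_def)

lemma cong_shift:
  fixes a b x y :: int
  assumes "(x + a) mod int n = (x + b) mod int n"
  shows "(y + a) mod int n = (y + b) mod int n"
proof -
  have "int n dvd (x + a) - (x + b)" using assms by (simp add: mod_eq_dvd_iff)
  then have "int n dvd (y + a) - (y + b)" by simp
  then show ?thesis by (simp add: mod_eq_dvd_iff)
qed

definition m where "m = idx (modn (int p + 1) n)"

lemma m_lt: "m < n" unfolding m_def using idx_prop[OF modn_in[OF n0]] by blast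

lemma mk: "modn (x + int m * int k) n = modn (x + 1) n"
proof -
  have "idx (modn (int p + int m * int k) n) = (idx p + m) mod n" using idx_shift[OF p_in] .
  also have "\<dots> = idx (modn (int p + 1) n)" using idx_p m_lt by (simp add: m_def)
  finally have "modn (int p + int m * int k) n = modn (int p + 1) n"
    using idx_inj modn_in[OF n0] by (meson inj_onD)
  then have "(int p + int m * int k) mod int n = (int p + 1) mod int n" using modn_cong[OF n0] by blast
  then have "(x + int m * int k) mod int n = (x + 1) mod int n" by (rule cong_shift)
  then show ?thesis using modn_cong[OF n0] by blast
qed

lemma step: "v \<in> {1..n} \<Longrightarrow> idx (modn (int v + 1) n) = (idx v + m) mod n"
  using idx_shift[of v m] mk[of "int v"] by simp

lemma cut_idx: "cut_after P v = Suc (idx v)"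
  unfolding cut_after_def idx_def using lenP by simp

definition c1 where "c1 = cut_after P (n - k)"
definition c2 where "c2 = cut_after P (modn (int p - int k - 1) n)"
definition lo where "lo = min c1 c2"
definition hi where "hi = max c1 c2"
definition ltf where "ltf i = (if i < lo then TA else if i < hi then TB else TC)"

lemma nk_in: "n - k \<in> {1..n}" using k1 kn n2 by auto

lemma c1_le: "c1 \<le> n" unfolding c1_def cut_idx using idx_prop[OF nk_in] by simp

lemma idx_n: "idx n = c1 mod n"
proof -
  have "idx (modn (int (n - k) + int 1 * int k) n) = (idx (n - k) + 1) mod n"
    using idx_shift[OF nk_in] .
  moreover have "modn (int (n - k) + int 1 * int k) n = n"
    using kn n2 modn_id[of n n] by (simp add: of_nat_diff)
  ultimately show ?thesis unfolding c1_def cut_idx by simp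
qed

lemma c2_eq: "c2 = n - m"
proof -
  define u where "u = modn (int p - int k - 1) n"
  have u: "u \<in> {1..n}" unfolding u_def using modn_in[OF n0] .
  have "idx (modn (int u + 1) n) = (idx u + m) mod n" using step[OF u] .
  moreover have "modn (int u + 1) n = modn (int p + int (n - 1) * int k) n"
  proof -
    have "modn (int u + 1) n = modn (int p - int k) n" unfolding u_def using modn_add[OF n0] by simp
    moreover have "(int p - int k) mod int n = (int p + int (n - 1) * int k) mod int n"
    proof -
      have "int (n - 1) * int k = int n * int k - int k" using n2 by (simp add: of_nat_diff algebra_simps)
      then have "(int p + int (n - 1) * int k) - (int p - int k) = int n * int k" by simp
      then have "int n dvd (int p + int (n - 1) * int k) - (int p - int k)" by simp
      then have "(int p + int (n - 1) * int k) mod int n = (int p - int k) mod int n"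
        by (simp only: mod_eq_dvd_iff)
      then show ?thesis by simp
    qed
    ultimately show ?thesis using modn_cong[OF n0] by metis
  qed
  moreover have "idx (modn (int p + int (n - 1) * int k) n) = n - 1"
    using idx_shift[OF p_in, of "n - 1"] idx_p n2 by simp
  ultimately have h: "(idx u + m) mod n = n - 1" by simp
  have "idx u < n" using idx_prop[OF u] by simp
  then have "idx u + m = n - 1" using h m_lt by (simp add: mod_if split: if_splits)
  then have "Suc (idx u) = n - m" using n2 by linarith
  then show ?thesis unfolding c2_def cut_idx u_def[symmetric] by simp
qed

lemma lohi: "lo \<le> hi" "hi \<le> n" unfolding lo_def hi_def using c1_le c2_eq by auto

lemma cut_lemma: "c = lo \<or> c = hi \<Longrightarrow> i < c \<Longrightarrow> c \<le> j \<Longrightarrow> ltf i \<noteq> ltf j"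
  using lohi by (auto simp: ltf_def)

lemma T_eq: "ternary_string n k P =
  map (\<lambda>v. if v \<in> set (take lo P) then TA else if v \<in> set (drop lo (take hi P)) then TB else TC) [1..<n+1]"
  by (simp add: ternary_string_def Let_def lo_def hi_def c1_def c2_def p_def)

lemma mem_take: "v \<in> {1..n} \<Longrightarrow> (v \<in> set (take lo P)) = (idx v < lo)"
proof -
  assume v: "v \<in> {1..n}"
  have "(v \<in> set (take lo P)) = (\<exists>i<min lo n. P ! i = v)"
    using lenP by (auto simp: in_set_conv_nth)
  also have "\<dots> = (idx v < lo)"
    using idx_prop[OF v] idx_nth by (metis min_less_iff_conj)
  finally show ?thesis .
qed

lemma mem_mid: "v \<in> {1..n} \<Longrightarrow> (v \<in> set (drop lo (take hi P))) = (lo \<le> idx v \<and> idx v < hi)"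
proof -
  assume v: "v \<in> {1..n}"
  have "(v \<in> set (drop lo (take hi P))) = (\<exists>i. lo \<le> i \<and> i < min hi n \<and> P ! i = v)"
  proof
    assume "v \<in> set (drop lo (take hi P))"
    then obtain i where i: "i < length (drop lo (take hi P))" "drop lo (take hi P) ! i = v"
      by (auto simp: in_set_conv_nth)
    have li: "lo + i < min hi n" using i(1) lenP by auto
    have "drop lo (take hi P) ! i = take hi P ! (lo + i)"
      using nth_drop[of lo "take hi P" i] li lenP by simp
    also have "\<dots> = P ! (lo + i)" using nth_take[of "lo + i" hi P] li by simp
    finally show "\<exists>i. lo \<le> i \<and> i < min hi n \<and> P ! i = v"
      using i li by (intro exI[of _ "lo + i"]) auto
  next
    assume "\<exists>i. lo \<le> i \<and> i < min hi n \<and> P ! i = v"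
    then obtain i where i: "lo \<le> i" "i < min hi n" "P ! i = v" by blast
    then have "drop lo (take hi P) ! (i - lo) = v" "i - lo < length (drop lo (take hi P))"
      using lenP by auto
    then show "v \<in> set (drop lo (take hi P))" by (metis nth_mem)
  qed
  also have "\<dots> = (lo \<le> idx v \<and> idx v < hi)"
    using idx_prop[OF v] idx_nth by (metis min_less_iff_conj)
  finally show ?thesis .
qed

lemma T_len: "length (ternary_string n k P) = n" by (simp add: T_eq)

lemma T_nth: "v \<in> {1..n} \<Longrightarrow> ternary_string n k P ! (v - 1) = ltf (idx v)"
proof -
  assume v: "v \<in> {1..n}"
  have "[1..<n+1] ! (v - 1) = v" using v by (subst nth_upt) auto
  moreover have "v - 1 < length [1..<n+1]" using v by auto
  ultimately have "ternary_string n k P ! (v - 1) =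
     (if v \<in> set (take lo P) then TA else if v \<in> set (drop lo (take hi P)) then TB else TC)"
    by (simp only: T_eq nth_map)
  then show ?thesis using mem_take[OF v] mem_mid[OF v] by (simp add: ltf_def)
qed

lemma is_core: "core (ternary_string n k P) n m idx ltf"
proof
  show "length (ternary_string n k P) = n" by (rule T_len)
  show "1 \<le> n" using n2 by simp
  show "m < n" by (rule m_lt)
  show "\<And>v. v \<in> {1..n} \<Longrightarrow> idx v < n" using idx_prop by blast
  show "inj_on idx {1..n}" by (rule idx_inj)
  show "\<And>v. v \<in> {1..n} \<Longrightarrow> ternary_string n k P ! (v - 1) = ltf (idx v)" by (rule T_nth)
  show "\<And>i j. i \<le> j \<Longrightarrow> ltf i \<le> ltf j" by (auto simp: ltf_def less_eq_tern_def)
  show "\<And>v. v \<in> {1..n} \<Longrightarrow> idx (modn (int v + 1) n) = (idx v + m) mod n" by (rule step)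
  show "\<And>i j. i < j \<Longrightarrow> j < n \<Longrightarrow> ltf i = ltf j \<Longrightarrow> \<not> (i < n - m \<and> n - m \<le> j)"
  proof -
    have "n - m = lo \<or> n - m = hi" using c2_eq by (auto simp: lo_def hi_def)
    then show "\<And>i j. i < j \<Longrightarrow> j < n \<Longrightarrow> ltf i = ltf j \<Longrightarrow> \<not> (i < n - m \<and> n - m \<le> j)"
      using cut_lemma by blast
  qed
  show "\<And>i. i < idx n \<Longrightarrow> ltf i \<noteq> ltf (idx n)"
  proof -
    fix i assume i: "i < idx n"
    show "ltf i \<noteq> ltf (idx n)"
    proof (cases "c1 < n")
      case True
      then have "idx n = c1" using idx_n by simp
      moreover have "c1 = lo \<or> c1 = hi" by (auto simp: lo_def hi_def)
      ultimately show ?thesis using cut_lemma i by auto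
    next
      case False
      then have "idx n = 0" using idx_n c1_le by simp
      then show ?thesis using i by simp
    qed
  qed
qed

end

theorem theorem4:
  fixes n k :: nat and P SA :: "nat list"
  assumes "n \<ge> 2"
    and "arith_prog_perm n k P"
    and "P \<noteq> rev [1..<n + 1]"
    and "is_suffix_array (ternary_string n k P) SA"
  shows "bwt_matrix (ternary_string n k P) = bwt_sa (ternary_string n k P) SA"
proof -
  interpret app n k P using assms by unfold_locales
  show ?thesis using core.bwt_eq[OF is_core assms(4)] .
qed

end
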